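(* Let $\mathcal T$ denote the set of Smirnov trees and, for $T\in\mathcal T$, let $a(T)$ be the label of its principal node $\alpha(T)$. Consider the set $$\mathcal X=\{(T,S,b)\in \mathcal T\times(\mathcal T\cup\{D,U\})\times\mathbb N:\ a(T)\neq b\},$$ where $D$ and $U$ are two formal symbols. Then the map $\Phi$ (defined in the context) is a well-defined bijection from $\mathcal X$ onto the set of Smirnov trees with at least $2$ nodes; it is weight-preserving, i.e. $w(\Phi(T,S,b))=w(T,S,b)$ for all $(T,S,b)\in\mathcal X$; and the principal node of $\Phi(T,S,b)$ has label $b$.
   Context: Trees are labeled rooted binary trees (each child is either a left or a right child, each node has at most one left and one right child) with labels in the positive integers $\mathbb N=\{1,2,\dots\}$, and have at least one node. Such a tree is a Smirnov tree if: whenever a left child has the same label $i$ as its parent, the parent also has a right child with label $<i$; and whenever a right child has the same label $i$ as its parent, the parent also has a left child with label $>i$. Let $\mathcal T$ be the set of Smirnov trees and $\mathcal T^c$ those whose root has label $c$. Principal path $P(T)$: start at the root; if the current vertex has no right child, stop; if the current vertex has a left child with the same label, move to that left child; otherwise move to the right child. The last vertex of $P(T)$ is the principal node $\alpha(T)$, with label $a(T)$; $M(T)$ and $m(T)$ are the maximum and minimum labels on $P(T)$. Weights: $\rho,\bar\rho,\lambda,\bar\lambda$ are commuting indeterminates and $x_1,x_2,\dots$ commuting variables. An edge from a parent with label $a$ to its right child with label $b$ has weight $\bar\rho$ if $a\le b$ and $\rho$ if $a>b$. An edge between a left child with label $a$ and its parent with label $b$ has weight $\bar\lambda$ if $a\le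 b$ and $\lambda$ if $a>b$. A node with label $a$ has weight $x_a$. The weight $w(T)$ of a tree is the product of the weights of all its edges and nodes. Weight of a triple $(T,S,b)\in\mathcal X$, with $a=a(T)$: $w(T,S,b)$ equals $\bar\rho\,w(T)x_b$ if $a<b,S=D$; $\rho\,w(T)x_b$ if $a>b,S=D$; $\bar\lambda\,w(T)x_b$ if $a<b,S=U$; $\lambda\,w(T)x_b$ if $a>b,S=U$; $\bar\lambda\bar\rho\,w(T)w(S)x_b$ if $a<b,S\in\mathcal T$; $\lambda\rho\,w(T)w(S)x_b$ if $a>b,S\in\mathcal T$. Definition of $\Phi(T,S,b)$. Write $\alpha=\alpha(T)$, $a=a(T)$, $P=P(T)$, $M=M(T)$, $m=m(T)$; if $S\in\mathcal T$ let $c$ be the label of its root. If $a<b$ (resp. $a>b$), let $\delta$ be the last vertex on $P$ with label $\ge b$ (resp. $\le b$) and $d$ its label (undefined if no such vertex exists). Note $\alpha$ has no right child. (1) If $S=D$, or $S\in\mathcal T^c$ with $a,c<b$, or $S\in\mathcal T^c$ with $a,c>b$: add to $\alpha$ a right child $\beta$ with label $b$; if $S=D$, $\beta$ has no children; if $S\in\mathcal T$, $\beta$ has $S$ as its left subtree (and no right child). (2) If $S=U$ and $a<b$, $M<b$; or $S=U$ and $a>b$, $m>b$; or $S\in\mathcal T^c$ and $a<b$, $M<b\le c$; or $S\in\mathcal T^c$ and $a>b$, $m>b\ge c$: add a new root $\beta$ with label $b$ whose left subtree is $T$ (and no right child); if $S\in\mathcal T$, additionally make $S$ the right subtree of $\alpha$.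 (3) If $S=U$, $a<b\le M$, $d>b$; or $S=U$, $a>b\ge m$, $d<b$; or $S\in\mathcal T^c$, $a<b$, $b\le c$, $b\le M$, $d>b$; or $S\in\mathcal T^c$, $a>b$, $b\ge c$, $b\ge m$, $d<b$: replace the right subtree of $\delta$ by a new node $\beta$ with label $b$, which has no right child and whose left subtree is the former right subtree of $\delta$; if $S\in\mathcal T$, additionally make $S$ the right subtree of $\alpha$. (4) If $S=U$, $a<b\le M$, $d=b$; or $S\in\mathcal T^c$, $a<b$, $b\le c$, $b\le M$, $d=b$: replace the left subtree of $\delta$ by a new node $\beta$ with label $b$, which has no right child and whose left subtree is the former left subtree of $\delta$ (empty if $\delta$ had none); if $S\in\mathcal T$, additionally make $S$ the right subtree of $\alpha$. (5) If $S=U$, $a>b\ge m$, $d=b$; or $S\in\mathcal T^c$, $a>b$, $b\ge c$, $b\ge m$, $d=b$: make the former right subtree of $\delta$ its new left subtree, and make its new right child a new node $\beta$ with label $b$, which has no right child and whose left subtree is the former left subtree of $\delta$; if $S\in\mathcal T$, additionally make $S$ the right subtree of $\alpha$. *)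

theory Defs
  imports Main "HOL-Library.Multiset"
begin

text \<open>Node l c r : left subtree l, label c, right subtree r. Leaf = empty tree.\<close>
datatype tree = Leaf | Node tree nat tree

datatype dir = L | R

fun lab :: "tree \<Rightarrow> nat option" where
  "lab Leaf = None"
| "lab (Node l c r) = Some c"

fun rootlab :: "tree \<Rightarrow> nat" where
  "rootlab Leaf = 0"
| "rootlab (Node l c r) = c"

fun nnodes :: "tree \<Rightarrow> nat" where
  "nnodes Leaf = 0"
| "nnodes (Node l c r) = Suc (nnodes l + nnodes r)"

fun labels_pos :: "tree \<Rightarrow> bool" where
  "labels_pos Leaf = True"
| "labels_pos (Node l c r) = (c \<ge> 1 \<and> labels_pos l \<and> labels_pos r)"

fun smir_local :: "tree \<Rightarrow> bool" where
  "smir_local Leaf = True"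
| "smir_local (Node l c r) =
     ((lab l = Some c \<longrightarrow> (\<exists>e. lab r = Some e \<and> e < c)) \<and>
      (lab r = Some c \<longrightarrow> (\<exists>e. lab l = Some e \<and> e > c)) \<and>
      smir_local l \<and> smir_local r)"

definition smirnov :: "tree \<Rightarrow> bool" where
  "smirnov t \<longleftrightarrow> t \<noteq> Leaf \<and> labels_pos t \<and> smir_local t"

fun sub :: "tree \<Rightarrow> dir list \<Rightarrow> tree" where
  "sub t [] = t"
| "sub Leaf (d # p) = Leaf"
| "sub (Node l c r) (L # p) = sub l p"
| "sub (Node l c r) (R # p) = sub r p"

fun modat :: "(tree \<Rightarrow> tree) \<Rightarrow> dir list \<Rightarrow> tree \<Rightarrow> tree" where
  "modat f [] t = f t"
| "modat f (d # p) Leaf = Leaf"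
| "modat f (L # p) (Node l c r) = Node (modat f p l) c r"
| "modat f (R # p) (Node l c r) = Node l c (modat f p r)"

fun ppath :: "tree \<Rightarrow> dir list list" where
  "ppath Leaf = []"
| "ppath (Node l c r) =
     [] # (if r = Leaf then []
           else if lab l = Some c then map (\<lambda>p. L # p) (ppath l)
           else map (\<lambda>p. R # p) (ppath r))"

definition alpha_pos :: "tree \<Rightarrow> dir list" where
  "alpha_pos t = last (ppath t)"

definition principal_label :: "tree \<Rightarrow> nat" where
  "principal_label t = rootlab (sub t (alpha_pos t))"

definition path_labels :: "tree \<Rightarrow> nat list" where
  "path_labels t = map (\<lambda>p. rootlab (sub t p)) (ppath t)"

definition pmax :: "tree \<Rightarrow> nat" where
  "pmax t = Max (set (path_labels t))"

definition pmin :: "tree \<Rightarrow> nat" where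
  "pmin t = Min (set (path_labels t))"

section \<open>Weights (monomials in commuting indeterminates, as multisets)\<close>

datatype var = Rho | RhoBar | Lam | LamBar | X nat

fun wt :: "tree \<Rightarrow> var multiset" where
  "wt Leaf = {#}"
| "wt (Node l c r) = {#X c#} + wt l + wt r
     + (case l of Leaf \<Rightarrow> {#} | Node _ a _ \<Rightarrow> {# if a \<le> c then LamBar else Lam #})
     + (case r of Leaf \<Rightarrow> {#} | Node _ b _ \<Rightarrow> {# if c \<le> b then RhoBar else Rho #})"

datatype second = D | U | Tr tree

definition Xset :: "(tree \<times> second \<times> nat) set" where
  "Xset = {(T, S, b). smirnov T \<and> (\<forall>s. S = Tr s \<longrightarrow> smirnov s) \<and> b \<ge> 1
                      \<and> principal_label T \<noteq> b}"

fun wtriple :: "tree \<times> second \<times> nat \<Rightarrow> var multiset" where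
  "wtriple (T, D, b) = (if principal_label T < b then {#RhoBar#} else {#Rho#}) + wt T + {#X b#}"
| "wtriple (T, U, b) = (if principal_label T < b then {#LamBar#} else {#Lam#}) + wt T + {#X b#}"
| "wtriple (T, Tr s, b) = (if principal_label T < b then {#LamBar, RhoBar#} else {#Lam, Rho#})
      + wt T + wt s + {#X b#}"

text \<open>Phi returns None when none of the cases (1)-(5) applies (or delta is undefined
  where needed); well-definedness on Xset is part of the theorem.\<close>
definition Phi :: "tree \<Rightarrow> second \<Rightarrow> nat \<Rightarrow> tree option" where
  "Phi T S b = (let
      P = ppath T; apos = alpha_pos T; a = principal_label T;
      M = pmax T; m = pmin T;
      isU = (S = U); isT = (\<exists>s. S = Tr s);
      s = (case S of Tr s \<Rightarrow> s | _ \<Rightarrow> Leaf);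
      c = rootlab s;
      T' = modat (\<lambda>t. case t of Leaf \<Rightarrow> Leaf | Node l x r \<Rightarrow> Node l x s) apos T;
      cands = filter (\<lambda>p. if a < b then rootlab (sub T p) \<ge> b else rootlab (sub T p) \<le> b) P;
      hasd = (cands \<noteq> []);
      dpos = last cands;
      d = rootlab (sub T dpos)
    in
      if S = D \<or> (isT \<and> a < b \<and> c < b) \<or> (isT \<and> a > b \<and> c > b) then
        Some (modat (\<lambda>t. case t of Leaf \<Rightarrow> Leaf | Node l x r \<Rightarrow> Node l x (Node s b Leaf)) apos T)
      else if (isU \<and> a < b \<and> M < b) \<or> (isU \<and> a > b \<and> m > b)
           \<or> (isT \<and> a < b \<and> M < b \<and> b \<le> c) \<or> (isT \<and> a > b \<and> m > b \<and> b \<ge> c) then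
        Some (Node T' b Leaf)
      else if hasd \<and> ((isU \<and> a < b \<and> b \<le> M \<and> d > b) \<or> (isU \<and> a > b \<and> b \<ge> m \<and> d < b)
           \<or> (isT \<and> a < b \<and> b \<le> c \<and> b \<le> M \<and> d > b)
           \<or> (isT \<and> a > b \<and> b \<ge> c \<and> b \<ge> m \<and> d < b)) then
        Some (modat (\<lambda>t. case t of Leaf \<Rightarrow> Leaf | Node l x r \<Rightarrow> Node l x (Node r b Leaf)) dpos T')
      else if hasd \<and> ((isU \<and> a < b \<and> b \<le> M \<and> d = b)
           \<or> (isT \<and> a < b \<and> b \<le> c \<and> b \<le> M \<and> d = b)) then
        Some (modat (\<lambda>t. case t of Leaf \<Rightarrow> Leaf | Node l x r \<Rightarrow> Node (Node l b Leaf) x r) dpos T')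
      else if hasd \<and> ((isU \<and> a > b \<and> b \<ge> m \<and> d = b)
           \<or> (isT \<and> a > b \<and> b \<ge> c \<and> b \<ge> m \<and> d = b)) then
        Some (modat (\<lambda>t. case t of Leaf \<Rightarrow> Leaf | Node l x r \<Rightarrow> Node r x (Node l b Leaf)) dpos T')
      else None)"

end

theory Submission
  imports Defs
begin


fun lsub :: "tree \<Rightarrow> tree" where "lsub Leaf = Leaf" | "lsub (Node l c r) = l"
fun rsub :: "tree \<Rightarrow> tree" where "rsub Leaf = Leaf" | "rsub (Node l c r) = r"

fun att :: "tree \<Rightarrow> tree \<Rightarrow> tree" where
  "att y Leaf = Leaf"
| "att y (Node l c r) = (if r = Leaf then Node l c y else if lab l = Some c then Node (att y l) c r
     else Node l c (att y r))"

fun aof :: "tree \<Rightarrow> nat" where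
  "aof Leaf = 0"
| "aof (Node l c r) = (if r = Leaf then c else if lab l = Some c then aof l else aof r)"

fun plabs :: "tree \<Rightarrow> nat list" where
  "plabs Leaf = []"
| "plabs (Node l c r) = c # (if r = Leaf then [] else if lab l = Some c then plabs l else plabs r)"

lemma lab_Some_iff: "lab t = Some c \<longleftrightarrow> (\<exists>l r. t = Node l c r)"
  by (cases t) auto

lemma lab_rootlab: "t \<noteq> Leaf \<Longrightarrow> lab t = Some (rootlab t)"
  by (cases t) auto

lemma ppath_ne: "t \<noteq> Leaf \<Longrightarrow> ppath t \<noteq> []"
  by (cases t) auto

lemma alpha_pos_Node: "alpha_pos (Node l c r) = (if r = Leaf then [] else if lab l = Some c then L # alpha_pos l else R # alpha_pos r)"
  unfolding alpha_pos_def
  by (auto simp: last_map ppath_ne lab_Some_iff)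

lemma sub_Leaf: "sub Leaf p = Leaf"
  by (cases p) auto

lemma principal_label_aof: "principal_label T = aof T"
proof (induction T)
  case Leaf
  then show ?case by (simp add: principal_label_def sub_Leaf)
next
  case (Node l c r)
  then show ?case by (auto simp: principal_label_def alpha_pos_Node)
qed

lemma path_labels_plabs: "path_labels T = plabs T"
proof (induction T)
  case Leaf
  then show ?case by (simp add: path_labels_def)
next
  case (Node l c r)
  then show ?case by (auto simp: path_labels_def o_def)
qed

lemma plabs_ne: "T \<noteq> Leaf \<Longrightarrow> plabs T \<noteq> []" by (cases T) auto

lemma aof_in: "T \<noteq> Leaf \<Longrightarrow> aof T \<in> set (plabs T)"
proof (induction T)
  case (Node l c r) then show ?case by (auto simp: lab_Some_iff)
qed simp

lemma rootlab_in: "T \<noteq> Leaf \<Longrightarrow> rootlab T \<in> set (plabs T)"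
  by (cases T) auto

lemma pmax_less: "T \<noteq> Leaf \<Longrightarrow> pmax T < b \<longleftrightarrow> (\<forall>x\<in>set (plabs T). x < b)"
  unfolding pmax_def path_labels_plabs by (simp add: plabs_ne)
lemma pmax_ge: "T \<noteq> Leaf \<Longrightarrow> b \<le> pmax T \<longleftrightarrow> (\<exists>x\<in>set (plabs T). b \<le> x)"
  unfolding pmax_def path_labels_plabs by (simp add: plabs_ne Max_ge_iff)
lemma pmin_gr: "T \<noteq> Leaf \<Longrightarrow> b < pmin T \<longleftrightarrow> (\<forall>x\<in>set (plabs T). b < x)"
  unfolding pmin_def path_labels_plabs by (simp add: plabs_ne)
lemma pmin_le: "T \<noteq> Leaf \<Longrightarrow> pmin T \<le> b \<longleftrightarrow> (\<exists>x\<in>set (plabs T). x \<le> b)"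
  unfolding pmin_def path_labels_plabs by (simp add: plabs_ne Min_le_iff)

lemma modat_alpha: "modat (\<lambda>t. case t of Leaf \<Rightarrow> Leaf | Node l x r \<Rightarrow> Node l x y) (alpha_pos T) T = att y T"
proof (induction T)
  case Leaf
  then show ?case by (cases "alpha_pos Leaf") auto
next
  case (Node l c r)
  then show ?case by (auto simp: alpha_pos_Node)
qed

definition cnd :: "(nat \<Rightarrow> bool) \<Rightarrow> tree \<Rightarrow> dir list list" where
  "cnd q T = filter (\<lambda>p. q (rootlab (sub T p))) (ppath T)"

lemma cnd_Node: "cnd q (Node l c r) = (if q c then [[]] else []) @
   (if r = Leaf then [] else if lab l = Some c then map (Cons L) (cnd q l) else map (Cons R) (cnd q r))"
  by (auto simp: cnd_def filter_map o_def)

lemma cnd_ne: "cnd q T \<noteq> [] \<longleftrightarrow> (\<exists>x\<in>set (plabs T). q x)"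
proof -
  have "cnd q T \<noteq> [] \<longleftrightarrow> (\<exists>p\<in>set (ppath T). q (rootlab (sub T p)))"
    by (auto simp: cnd_def filter_empty_conv)
  also have "\<dots> \<longleftrightarrow> (\<exists>x\<in>set (path_labels T). q x)"
    by (auto simp: path_labels_def)
  finally show ?thesis by (simp add: path_labels_plabs)
qed

lemma cnd_last: "cnd q T \<noteq> [] \<Longrightarrow> q (rootlab (sub T (last (cnd q T))))"
proof -
  assume "cnd q T \<noteq> []"
  then have "last (cnd q T) \<in> set (cnd q T)" by simp
  then show ?thesis by (simp add: cnd_def)
qed



lemma lab_att[simp]: "lab (att y T) = lab T"
  by (cases T) auto
lemma rootlab_att[simp]: "rootlab (att y T) = rootlab T"
  by (cases T) auto
lemma att_Leaf_iff[simp]: "att y T = Leaf \<longleftrightarrow> T = Leaf"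
  by (cases T) auto

lemma att_Leaf[simp]: "att Leaf T = T"
  by (induction T) auto

lemma smir_local_Node_lab: "smir_local (Node l c Leaf) \<Longrightarrow> lab l \<noteq> Some c"
  by auto

lemma aof_att: "smir_local T \<Longrightarrow> T \<noteq> Leaf \<Longrightarrow> y \<noteq> Leaf \<Longrightarrow> aof (att y T) = aof y"
proof (induction T)
  case (Node l c r)
  show ?case
  proof (cases "r = Leaf")
    case True
    with Node.prems show ?thesis by auto
  next
    case False
    with Node show ?thesis by (auto simp: lab_Some_iff)
  qed
qed simp

lemma smir_local_att: "smir_local T \<Longrightarrow> smir_local y \<Longrightarrow> (y = Leaf \<or> rootlab y \<noteq> aof T) \<Longrightarrow> smir_local (att y T)"
proof (induction T)
  case (Node l c r)
  show ?case
  proof (cases "r = Leaf")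
    case True
    with Node.prems show ?thesis by (auto simp: lab_Some_iff)
  next
    case False
    with Node show ?thesis by auto
  qed
qed simp

lemma labels_pos_att: "labels_pos T \<Longrightarrow> labels_pos y \<Longrightarrow> labels_pos (att y T)"
  by (induction T) auto

lemma nnodes_att: "T \<noteq> Leaf \<Longrightarrow> nnodes (att y T) = nnodes T + nnodes y"
  by (induction T) (auto simp: lab_Some_iff)

definition ew :: "nat \<Rightarrow> tree \<Rightarrow> var multiset" where
  "ew a y = (case y of Leaf \<Rightarrow> {#} | Node _ b _ \<Rightarrow> {# if a \<le> b then RhoBar else Rho #})"

definition lw :: "tree \<Rightarrow> nat \<Rightarrow> var multiset" where
  "lw y c = (case y of Leaf \<Rightarrow> {#} | Node _ a _ \<Rightarrow> {# if a \<le> c then LamBar else Lam #})"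

lemma wt_Node': "wt (Node l c r) = {#X c#} + wt l + wt r + lw l c + ew c r"
  by (simp add: lw_def ew_def)

lemma ew_rootlab: "ew a y = (if y = Leaf then {#} else {# if a \<le> rootlab y then RhoBar else Rho #})"
  by (cases y) (auto simp: ew_def)
lemma lw_rootlab: "lw y c = (if y = Leaf then {#} else {# if rootlab y \<le> c then LamBar else Lam #})"
  by (cases y) (auto simp: lw_def)

lemma lw_att[simp]: "lw (att y T) c = lw T c"
  by (simp add: lw_rootlab)
lemma ew_att[simp]: "ew c (att y T) = ew c T"
  by (simp add: ew_rootlab)

lemma wt_att: "T \<noteq> Leaf \<Longrightarrow> wt (att y T) = wt T + wt y + ew (aof T) y"
proof (induction T)
  case (Node l c r)
  show ?case
  proof (cases "r = Leaf")
    case True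
    then show ?thesis by (simp add: wt_Node' ew_rootlab del: wt.simps(2))
  next
    case False
    note F = this
    show ?thesis
    proof (cases "lab l = Some c")
      case True
      then have "l \<noteq> Leaf" by auto
      with True F Node.IH(1) show ?thesis by (simp add: wt_Node' del: wt.simps(2))
    next
      case False
      with F Node.IH(2) show ?thesis by (simp add: wt_Node' del: wt.simps(2))
    qed
  qed
qed simp



fun pcut :: "(nat \<Rightarrow> bool) \<Rightarrow> tree \<Rightarrow> tree \<times> tree" where
  "pcut P Leaf = (Leaf, Leaf)"
| "pcut P (Node l c r) = (if r = Leaf then (Node l c r, Leaf)
    else if lab l = Some c then (Node (fst (pcut P l)) c r, snd (pcut P l))
    else if P (rootlab r) then (Node l c Leaf, r)
    else (Node l c (fst (pcut P r)), snd (pcut P r)))"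

lemma lab_cut[simp]: "lab (fst (pcut P T)) = lab T"
  by (cases T) auto
lemma rootlab_cut[simp]: "rootlab (fst (pcut P T)) = rootlab T"
  by (cases T) auto
lemma cut_Leaf_iff[simp]: "fst (pcut P T) = Leaf \<longleftrightarrow> T = Leaf"
  by (cases T) auto

lemma att_cut: "att (snd (pcut P T)) (fst (pcut P T)) = T"
proof (induction T)
  case (Node l c r)
  then show ?case by (simp add: lab_Some_iff)
qed simp

lemma cut_att: "smir_local T \<Longrightarrow> T \<noteq> Leaf \<Longrightarrow> (\<forall>x\<in>set (plabs T). \<not> P x) \<Longrightarrow>
   (y = Leaf \<or> P (rootlab y)) \<Longrightarrow> pcut P (att y T) = (T, y)"
proof (induction T)
  case (Node l c r)
  show ?case
  proof (cases "r = Leaf")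
    case True
    with Node.prems show ?thesis by (auto simp: lab_Some_iff)
  next
    case False
    note F = this
    show ?thesis
    proof (cases "lab l = Some c")
      case True
      then have "l \<noteq> Leaf" by auto
      with True F Node.IH(1) Node.prems show ?thesis by simp
    next
      case False
      have "rootlab r \<in> set (plabs r)" using F by (rule rootlab_in)
      with False F Node.IH(2) Node.prems show ?thesis by simp
    qed
  qed
qed simp

lemma cut_plabs: "\<not> P (rootlab T) \<Longrightarrow> \<forall>x\<in>set (plabs (fst (pcut P T))). \<not> P x"
proof (induction T)
  case (Node l c r)
  show ?case
  proof (cases "r = Leaf")
    case True then show ?thesis using Node.prems by simp
  next
    case F: False
    show ?thesis
    proof (cases "lab l = Some c")
      case True
      then have "rootlab l = c" by (auto simp: lab_Some_iff)
      with True F Node.IH(1) Node.prems show ?thesis by simp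
    next
      case False
      with F Node.IH(2) Node.prems show ?thesis by simp
    qed
  qed
qed simp

lemma cut_snd: "snd (pcut P T) = Leaf \<or> P (rootlab (snd (pcut P T)))"
  by (induction T) simp_all

lemma smir_cut: "smir_local T \<Longrightarrow> smir_local (fst (pcut P T)) \<and> smir_local (snd (pcut P T))"
proof (induction T)
  case (Node l c r)
  then show ?case by (auto simp: lab_Some_iff)
qed simp

lemma lpos_cut: "labels_pos T \<Longrightarrow> labels_pos (fst (pcut P T)) \<and> labels_pos (snd (pcut P T))"
proof (induction T)
  case (Node l c r)
  then show ?case by simp
qed simp



definition sv :: "second \<Rightarrow> tree" where "sv S = (case S of Tr s \<Rightarrow> s | _ \<Rightarrow> Leaf)"

definition c1 :: "second \<Rightarrow> nat \<Rightarrow> nat \<Rightarrow> bool" where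
  "c1 S a b = (S = D \<or> (\<exists>s. S = Tr s \<and> ((a < b \<and> rootlab s < b) \<or> (b < a \<and> b < rootlab s))))"

definition k2 :: "tree \<Rightarrow> second \<Rightarrow> nat \<Rightarrow> bool" where
  "k2 T S b = (\<not> c1 S (aof T) b \<and> ((aof T < b \<and> (\<forall>x\<in>set (plabs T). x < b)) \<or> (b < aof T \<and> (\<forall>x\<in>set (plabs T). b < x))))"

fun phi :: "tree \<Rightarrow> second \<Rightarrow> nat \<Rightarrow> tree" where
  "phi Leaf S b = Leaf"
| "phi (Node l c r) S b =
   (if c1 S (aof (Node l c r)) b then att (Node (sv S) b Leaf) (Node l c r)
    else if k2 (Node l c r) S b then Node (att (sv S) (Node l c r)) b Leaf
    else if r = Leaf then Leaf
    else if lab l = Some c then Node (phi l S b) c r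
    else if k2 r S b then
      (if c = b then (if aof r < b then Node (Node l b Leaf) c (att (sv S) r) else Node (att (sv S) r) c (Node l b Leaf))
       else Node l c (Node (att (sv S) r) b Leaf))
    else Node l c (phi r S b))"

declare phi.simps(2)[simp del]

lemma aof_L: "r \<noteq> Leaf \<Longrightarrow> lab l = Some c \<Longrightarrow> aof (Node l c r) = aof l" by simp
lemma aof_R: "r \<noteq> Leaf \<Longrightarrow> lab l \<noteq> Some c \<Longrightarrow> aof (Node l c r) = aof r" by simp

lemma k2_leaf: "k2 (Node l c Leaf) S b \<longleftrightarrow> \<not> c1 S c b \<and> c \<noteq> b"
  by (auto simp: k2_def)

lemma k2_left: "r \<noteq> Leaf \<Longrightarrow> lab l = Some c \<Longrightarrow> k2 (Node l c r) S b \<longleftrightarrow> k2 l S b"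
  by (auto simp: k2_def lab_Some_iff)

lemma k2_right: "r \<noteq> Leaf \<Longrightarrow> lab l \<noteq> Some c \<Longrightarrow> k2 (Node l c r) S b \<longleftrightarrow>
   (k2 r S b \<and> (aof r < b \<longrightarrow> c < b) \<and> (b < aof r \<longrightarrow> b < c))"
  by (auto simp: k2_def)

lemma k2_lt: "k2 T S b \<Longrightarrow> aof T < b \<Longrightarrow> x \<in> set (plabs T) \<Longrightarrow> x < b"
  by (auto simp: k2_def)
lemma k2_gt: "k2 T S b \<Longrightarrow> b < aof T \<Longrightarrow> x \<in> set (plabs T) \<Longrightarrow> b < x"
  by (auto simp: k2_def)

lemma phi_c1: "T \<noteq> Leaf \<Longrightarrow> c1 S (aof T) b \<Longrightarrow> phi T S b = att (Node (sv S) b Leaf) T"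
  by (cases T) (simp_all add: phi.simps(2))

lemma phi_k2: "T \<noteq> Leaf \<Longrightarrow> \<not> c1 S (aof T) b \<Longrightarrow> k2 T S b \<Longrightarrow> phi T S b = Node (att (sv S) T) b Leaf"
  by (cases T) (simp_all add: phi.simps(2))

lemma phi_L: "r \<noteq> Leaf \<Longrightarrow> lab l = Some c \<Longrightarrow> \<not> c1 S (aof l) b \<Longrightarrow> \<not> k2 l S b \<Longrightarrow>
   phi (Node l c r) S b = Node (phi l S b) c r"
  by (simp add: phi.simps(2) k2_left)

lemma phi_R: "r \<noteq> Leaf \<Longrightarrow> lab l \<noteq> Some c \<Longrightarrow> \<not> c1 S (aof r) b \<Longrightarrow> \<not> k2 r S b \<Longrightarrow>
   phi (Node l c r) S b = Node l c (phi r S b)"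
  by (simp add: phi.simps(2) k2_right)

lemma phi_root: "r \<noteq> Leaf \<Longrightarrow> lab l \<noteq> Some c \<Longrightarrow> \<not> c1 S (aof r) b \<Longrightarrow> \<not> k2 (Node l c r) S b \<Longrightarrow> k2 r S b \<Longrightarrow>
   phi (Node l c r) S b = (if c = b then (if aof r < b then Node (Node l b Leaf) c (att (sv S) r) else Node (att (sv S) r) c (Node l b Leaf))
       else Node l c (Node (att (sv S) r) b Leaf))"
  by (simp add: phi.simps(2))

lemma root_facts:
  assumes "r \<noteq> Leaf" "lab l \<noteq> Some c" "\<not> k2 (Node l c r) S b" "k2 r S b" "aof r \<noteq> b"
  shows "(aof r < b \<longrightarrow> rootlab r < b \<and> b \<le> c) \<and> (b < aof r \<longrightarrow> b < rootlab r \<and> c \<le> b)"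
  using assms k2_lt[OF assms(4)] k2_gt[OF assms(4)] rootlab_in[OF assms(1)]
  by (auto simp: k2_right)

lemma sv_far: "\<not> c1 S a b \<Longrightarrow> sv S = Leaf \<or> ((a < b \<longrightarrow> b \<le> rootlab (sv S)) \<and> (b < a \<longrightarrow> rootlab (sv S) \<le> b))"
  by (cases S) (auto simp: c1_def sv_def)

lemma sv_ne_a: "\<not> c1 S a b \<Longrightarrow> a \<noteq> b \<Longrightarrow> sv S = Leaf \<or> rootlab (sv S) \<noteq> a"
  using sv_far[of S a b] by auto

lemma rsub_nL: "rsub t \<noteq> Leaf \<Longrightarrow> t \<noteq> Leaf" by auto

lemma core_basic:
  "T \<noteq> Leaf \<Longrightarrow> aof T \<noteq> b \<Longrightarrow> \<not> c1 S (aof T) b \<Longrightarrow> \<not> k2 T S b \<Longrightarrow>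
   rootlab (phi T S b) = rootlab T \<and> rsub (phi T S b) \<noteq> Leaf \<and> nnodes (phi T S b) = nnodes T + nnodes (sv S) + 1"
proof (induction T)
  case (Node l c r)
  have rL: "r \<noteq> Leaf" using Node.prems by (auto simp: k2_leaf)
  show ?case
  proof (cases "lab l = Some c")
    case True
    then have lL: "l \<noteq> Leaf" by auto
    have a: "aof (Node l c r) = aof l" using rL True by simp
    have nk: "\<not> k2 l S b" using Node.prems k2_left[OF rL True] by simp
    have e: "phi (Node l c r) S b = Node (phi l S b) c r"
      using phi_L[OF rL True] Node.prems a nk by simp
    show ?thesis using Node.IH(1)[OF lL] Node.prems a nk e rL by simp
  next
    case False
    have a: "aof (Node l c r) = aof r" using rL False by simp
    show ?thesis
    proof (cases "k2 r S b")
      case True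
      have e: "phi (Node l c r) S b = (if c = b then (if aof r < b then Node (Node l b Leaf) c (att (sv S) r) else Node (att (sv S) r) c (Node l b Leaf))
       else Node l c (Node (att (sv S) r) b Leaf))"
        using phi_root[OF rL False] Node.prems a True by simp
      show ?thesis using e rL by (simp add: nnodes_att)
    next
      case nk: False
      have e: "phi (Node l c r) S b = Node l c (phi r S b)"
        using phi_R[OF rL False] Node.prems a nk by simp
      show ?thesis using Node.IH(2)[OF rL] Node.prems a nk e rL by (auto dest: rsub_nL)
    qed
  qed
qed simp

lemma core_lab: "T \<noteq> Leaf \<Longrightarrow> aof T \<noteq> b \<Longrightarrow> \<not> c1 S (aof T) b \<Longrightarrow> \<not> k2 T S b \<Longrightarrow>
   lab (phi T S b) = lab T"
  using core_basic[of T b S] by (metis lab_rootlab rsub_nL)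

lemma core_smir:
  "T \<noteq> Leaf \<Longrightarrow> aof T \<noteq> b \<Longrightarrow> \<not> c1 S (aof T) b \<Longrightarrow> \<not> k2 T S b \<Longrightarrow> smir_local T \<Longrightarrow> smir_local (sv S) \<Longrightarrow>
   smir_local (phi T S b) \<and> aof (phi T S b) = b \<and> (labels_pos T \<longrightarrow> labels_pos (sv S) \<longrightarrow> 1 \<le> b \<longrightarrow> labels_pos (phi T S b))"
proof (induction T)
  case (Node l c r)
  have rL: "r \<noteq> Leaf" using Node.prems by (auto simp: k2_leaf)
  show ?case
  proof (cases "lab l = Some c")
    case True
    then have lL: "l \<noteq> Leaf" by auto
    have a: "aof (Node l c r) = aof l" using rL True by simp
    have nk: "\<not> k2 l S b" using Node.prems k2_left[OF rL True] by simp
    have e: "phi (Node l c r) S b = Node (phi l S b) c r"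
      using phi_L[OF rL True] Node.prems a nk by simp
    have lb: "lab (phi l S b) = lab l" using core_lab[OF lL] Node.prems a nk by simp
    show ?thesis using Node.IH(1)[OF lL] Node.prems a nk e rL lb True by simp
  next
    case False
    have a: "aof (Node l c r) = aof r" using rL False by simp
    show ?thesis
    proof (cases "k2 r S b")
      case True
      have e: "phi (Node l c r) S b = (if c = b then (if aof r < b then Node (Node l b Leaf) c (att (sv S) r) else Node (att (sv S) r) c (Node l b Leaf))
       else Node l c (Node (att (sv S) r) b Leaf))"
        using phi_root[OF rL False] Node.prems a True by simp
      have rf: "(aof r < b \<longrightarrow> rootlab r < b \<and> b \<le> c) \<and> (b < aof r \<longrightarrow> b < rootlab r \<and> c \<le> b)"
        using root_facts[OF rL False] Node.prems a True by simp
      have la: "lab (att (sv S) r) = Some (rootlab r)" using rL by (simp add: lab_rootlab)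
      have sm: "smir_local (att (sv S) r)"
        using smir_local_att[of r "sv S"] sv_ne_a[of S "aof r" b] Node.prems a by simp
      have lp: "labels_pos r \<Longrightarrow> labels_pos (sv S) \<Longrightarrow> labels_pos (att (sv S) r)"
        by (rule labels_pos_att)
      have ab: "aof r < b \<or> b < aof r" using Node.prems a by auto
      show ?thesis using e rL rf la sm lp ab Node.prems False by auto
    next
      case nk: False
      have e: "phi (Node l c r) S b = Node l c (phi r S b)"
        using phi_R[OF rL False] Node.prems a nk by simp
      have lb: "lab (phi r S b) = lab r" using core_lab[OF rL] Node.prems a nk by simp
      have nl: "phi r S b \<noteq> Leaf" using lb lab_rootlab[OF rL] by auto
      show ?thesis using Node.IH(2)[OF rL] Node.prems a nk e rL lb False nl by simp
    qed
  qed
qed simp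

lemma core_wt:
  "T \<noteq> Leaf \<Longrightarrow> aof T \<noteq> b \<Longrightarrow> \<not> c1 S (aof T) b \<Longrightarrow> \<not> k2 T S b \<Longrightarrow>
   wt (phi T S b) = wt T + wt (sv S) + ew (aof T) (sv S) + {#X b#} + {#if aof T < b then LamBar else Lam#}"
proof (induction T)
  case (Node l c r)
  have rL: "r \<noteq> Leaf" using Node.prems by (auto simp: k2_leaf)
  show ?case
  proof (cases "lab l = Some c")
    case True
    then have lL: "l \<noteq> Leaf" by auto
    have a: "aof (Node l c r) = aof l" using rL True by simp
    have nk: "\<not> k2 l S b" using Node.prems k2_left[OF rL True] by simp
    have e: "phi (Node l c r) S b = Node (phi l S b) c r"
      using phi_L[OF rL True] Node.prems a nk by simp
    have lb: "lw (phi l S b) c = lw l c" using core_basic[OF lL] Node.prems a nk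
      by (auto simp: lw_rootlab dest: rsub_nL)
    show ?thesis using Node.IH(1)[OF lL] Node.prems a nk e rL lb
      by (simp add: wt_Node' del: wt.simps(2))
  next
    case False
    have a: "aof (Node l c r) = aof r" using rL False by simp
    show ?thesis
    proof (cases "k2 r S b")
      case True
      have e: "phi (Node l c r) S b = (if c = b then (if aof r < b then Node (Node l b Leaf) c (att (sv S) r) else Node (att (sv S) r) c (Node l b Leaf))
       else Node l c (Node (att (sv S) r) b Leaf))"
        using phi_root[OF rL False] Node.prems a True by simp
      have rf: "(aof r < b \<longrightarrow> rootlab r < b \<and> b \<le> c) \<and> (b < aof r \<longrightarrow> b < rootlab r \<and> c \<le> b)"
        using root_facts[OF rL False] Node.prems a True by simp
      have wa: "wt (att (sv S) r) = wt r + wt (sv S) + ew (aof r) (sv S)" using rL by (rule wt_att)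
      have ab: "aof r < b \<or> b < aof r" using Node.prems a by auto
      show ?thesis using e rL rf wa ab a
        by (auto simp: wt_Node' lw_rootlab ew_rootlab simp del: wt.simps(2))
    next
      case nk: False
      have e: "phi (Node l c r) S b = Node l c (phi r S b)"
        using phi_R[OF rL False] Node.prems a nk by simp
      have lb: "ew c (phi r S b) = ew c r" using core_basic[OF rL] Node.prems a nk
        by (auto simp: ew_rootlab dest: rsub_nL)
      show ?thesis using Node.IH(2)[OF rL] Node.prems a nk e rL lb
        by (simp add: wt_Node' del: wt.simps(2))
    qed
  qed
qed simp



definition mkS :: "tree \<Rightarrow> second" where "mkS s = (if s = Leaf then U else Tr s)"

fun psi :: "tree \<Rightarrow> tree \<times> second \<times> nat" where
  "psi Leaf = (Leaf, D, 0)"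
| "psi (Node l c r) =
   (if r = Leaf then
      (if rootlab l < c then (fst (pcut (\<lambda>x. c \<le> x) l), mkS (snd (pcut (\<lambda>x. c \<le> x) l)), c)
       else (fst (pcut (\<lambda>x. x \<le> c) l), mkS (snd (pcut (\<lambda>x. x \<le> c) l)), c))
    else if lab l = Some c then
      (if rsub l = Leaf then (Node (lsub l) c (fst (pcut (\<lambda>x. c \<le> x) r)), mkS (snd (pcut (\<lambda>x. c \<le> x) r)), c)
       else (Node (fst (psi l)) c r, snd (psi l)))
    else if rsub r = Leaf then
      (if c = rootlab r then (Node (lsub r) c (fst (pcut (\<lambda>y. y \<le> c) l)), mkS (snd (pcut (\<lambda>y. y \<le> c) l)), c)
       else if lsub r = Leaf then (Node l c Leaf, D, rootlab r)
       else if (c < rootlab r \<and> rootlab (lsub r) < rootlab r) \<or> (rootlab r < c \<and> rootlab r < rootlab (lsub r))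
         then (Node l c Leaf, Tr (lsub r), rootlab r)
       else if rootlab r < c then
         (Node l c (fst (pcut (\<lambda>y. rootlab r \<le> y) (lsub r))), mkS (snd (pcut (\<lambda>y. rootlab r \<le> y) (lsub r))), rootlab r)
       else
         (Node l c (fst (pcut (\<lambda>y. y \<le> rootlab r) (lsub r))), mkS (snd (pcut (\<lambda>y. y \<le> rootlab r) (lsub r))), rootlab r))
    else (Node l c (fst (psi r)), snd (psi r)))"

declare psi.simps(2)[simp del]

lemma rsub_att: "x \<noteq> Leaf \<Longrightarrow> T \<noteq> Leaf \<Longrightarrow> rsub (att x T) \<noteq> Leaf"
  by (induction T) auto

lemma mkS_sv: "S \<noteq> D \<Longrightarrow> (\<forall>s. S = Tr s \<longrightarrow> s \<noteq> Leaf) \<Longrightarrow> mkS (sv S) = S"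
  by (cases S) (auto simp: mkS_def sv_def)

lemma psi_c1: "smir_local T \<Longrightarrow> T \<noteq> Leaf \<Longrightarrow> c1 S (aof T) b \<Longrightarrow> (\<forall>s. S = Tr s \<longrightarrow> s \<noteq> Leaf) \<Longrightarrow> aof T \<noteq> b \<Longrightarrow>
  psi (att (Node (sv S) b Leaf) T) = (T, S, b)"
proof (induction T)
  case (Node l c r)
  show ?case
  proof (cases "r = Leaf")
    case True
    then have ll: "lab l \<noteq> Some c" using Node.prems by auto
    have ac: "aof (Node l c r) = c" using True by simp
    show ?thesis
    proof (cases "sv S = Leaf")
      case True
      then have "S = D" using Node.prems by (cases S) (auto simp: sv_def c1_def)
      then show ?thesis using True \<open>r = Leaf\<close> ll ac Node.prems by (simp add: psi.simps(2))
    next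
      case False
      then obtain s where S: "S = Tr s" "s \<noteq> Leaf" using Node.prems by (cases S) (auto simp: sv_def c1_def)
      then show ?thesis using \<open>r = Leaf\<close> ll ac Node.prems by (auto simp: psi.simps(2) sv_def c1_def)
    qed
  next
    case F: False
    show ?thesis
    proof (cases "lab l = Some c")
      case True
      then have lL: "l \<noteq> Leaf" by auto
      have a: "aof (Node l c r) = aof l" using F True by simp
      have "rsub (att (Node (sv S) b Leaf) l) \<noteq> Leaf" using lL by (simp add: rsub_att)
      then show ?thesis using Node.IH(1)[OF _ lL] Node.prems a F True by (simp add: psi.simps(2))
    next
      case False
      have a: "aof (Node l c r) = aof r" using F False by simp
      have "rsub (att (Node (sv S) b Leaf) r) \<noteq> Leaf" using F by (simp add: rsub_att)
      then show ?thesis using Node.IH(2)[OF _ F] Node.prems a F False by (simp add: psi.simps(2))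
    qed
  qed
qed simp

lemma k2_nc1: "k2 T S b \<Longrightarrow> \<not> c1 S (aof T) b" by (simp add: k2_def)
lemma nc1_nD: "\<not> c1 S a b \<Longrightarrow> S \<noteq> D" by (auto simp: c1_def)

lemma psi_k2: "smir_local T \<Longrightarrow> T \<noteq> Leaf \<Longrightarrow> k2 T S b \<Longrightarrow> (\<forall>s. S = Tr s \<longrightarrow> s \<noteq> Leaf) \<Longrightarrow> aof T \<noteq> b \<Longrightarrow>
  psi (Node (att (sv S) T) b Leaf) = (T, S, b)"
proof -
  assume sm: "smir_local T" and nl: "T \<noteq> Leaf" and k: "k2 T S b" and v: "\<forall>s. S = Tr s \<longrightarrow> s \<noteq> Leaf" and ab: "aof T \<noteq> b"
  have nc: "\<not> c1 S (aof T) b" using k by (rule k2_nc1)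
  have mk: "mkS (sv S) = S" using mkS_sv[OF nc1_nD[OF nc] v] .
  have far: "sv S = Leaf \<or> ((aof T < b \<longrightarrow> b \<le> rootlab (sv S)) \<and> (b < aof T \<longrightarrow> rootlab (sv S) \<le> b))"
    using sv_far[OF nc] .
  have rl: "rootlab T \<in> set (plabs T)" using nl by (rule rootlab_in)
  show ?thesis
  proof (cases "aof T < b")
    case True
    have all: "\<forall>x\<in>set (plabs T). \<not> b \<le> x" using k2_lt[OF k True] by (meson not_less)
    have rt: "rootlab T < b" using k2_lt[OF k True rl] .
    have "pcut (\<lambda>x. b \<le> x) (att (sv S) T) = (T, sv S)"
      using cut_att[OF sm nl all] far True by auto
    then show ?thesis using rt mk by (simp add: psi.simps(2))
  next
    case False
    then have gt: "b < aof T" using ab by auto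
    have all: "\<forall>x\<in>set (plabs T). \<not> x \<le> b" using k2_gt[OF k gt] by (meson not_less)
    have rt: "b < rootlab T" using k2_gt[OF k gt rl] .
    have "pcut (\<lambda>x. x \<le> b) (att (sv S) T) = (T, sv S)"
      using cut_att[OF sm nl all] far gt by auto
    then show ?thesis using rt mk by (simp add: psi.simps(2))
  qed
qed

lemma core_psi:
  "T \<noteq> Leaf \<Longrightarrow> aof T \<noteq> b \<Longrightarrow> \<not> c1 S (aof T) b \<Longrightarrow> \<not> k2 T S b \<Longrightarrow> smir_local T \<Longrightarrow>
   (\<forall>s. S = Tr s \<longrightarrow> s \<noteq> Leaf) \<Longrightarrow> psi (phi T S b) = (T, S, b)"
proof (induction T)
  case (Node l c r)
  have rL: "r \<noteq> Leaf" using Node.prems by (auto simp: k2_leaf)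
  show ?case
  proof (cases "lab l = Some c")
    case True
    then have lL: "l \<noteq> Leaf" by auto
    have a: "aof (Node l c r) = aof l" using rL True by simp
    have nk: "\<not> k2 l S b" using Node.prems k2_left[OF rL True] by simp
    have e: "phi (Node l c r) S b = Node (phi l S b) c r"
      using phi_L[OF rL True] Node.prems a nk by simp
    have lb: "lab (phi l S b) = lab l" using core_lab[OF lL] Node.prems a nk by simp
    have rs: "rsub (phi l S b) \<noteq> Leaf" using core_basic[OF lL] Node.prems a nk by simp
    show ?thesis using Node.IH(1)[OF lL] Node.prems a nk e rL lb True rs by (simp add: psi.simps(2))
  next
    case False
    have a: "aof (Node l c r) = aof r" using rL False by simp
    show ?thesis
    proof (cases "k2 r S b")
      case True
      have e: "phi (Node l c r) S b = (if c = b then (if aof r < b then Node (Node l b Leaf) c (att (sv S) r) else Node (att (sv S) r) c (Node l b Leaf))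
       else Node l c (Node (att (sv S) r) b Leaf))"
        using phi_root[OF rL False] Node.prems a True by simp
      have rf: "(aof r < b \<longrightarrow> rootlab r < b \<and> b \<le> c) \<and> (b < aof r \<longrightarrow> b < rootlab r \<and> c \<le> b)"
        using root_facts[OF rL False] Node.prems a True by simp
      have nc: "\<not> c1 S (aof r) b" using Node.prems a by simp
      have mk: "mkS (sv S) = S" using mkS_sv[OF nc1_nD[OF nc]] Node.prems by simp
      have far: "sv S = Leaf \<or> ((aof r < b \<longrightarrow> b \<le> rootlab (sv S)) \<and> (b < aof r \<longrightarrow> rootlab (sv S) \<le> b))"
        using sv_far[OF nc] .
      have smr: "smir_local r" using Node.prems by simp
      have la: "lab (att (sv S) r) = Some (rootlab r)" using rL by (simp add: lab_rootlab)
      show ?thesis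
      proof (cases "aof r < b")
        case lt: True
        have all: "\<forall>x\<in>set (plabs r). \<not> b \<le> x" using k2_lt[OF True lt] by (meson not_less)
        have cu: "pcut (\<lambda>x. b \<le> x) (att (sv S) r) = (r, sv S)"
          using cut_att[OF smr rL all] far lt by auto
        show ?thesis
        proof (cases "c = b")
          case True
          then show ?thesis using e lt cu mk rL by (simp add: psi.simps(2))
        next
          case False
          then have "b < c" using rf lt by auto
          then show ?thesis using e lt cu mk rL rf False la \<open>lab l \<noteq> Some c\<close> by (auto simp: psi.simps(2))
        qed
      next
        case ge: False
        then have gt: "b < aof r" using Node.prems a by auto
        have all: "\<forall>x\<in>set (plabs r). \<not> x \<le> b" using k2_gt[OF True gt] by (meson not_less)
        have cu: "pcut (\<lambda>x. x \<le> b) (att (sv S) r) = (r, sv S)"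
          using cut_att[OF smr rL all] far gt by auto
        show ?thesis
        proof (cases "c = b")
          case True
          then show ?thesis using e gt cu mk rL rf la by (simp add: psi.simps(2))
        next
          case False
          then have "c < b" using rf gt by auto
          then show ?thesis using e gt cu mk rL rf False la \<open>lab l \<noteq> Some c\<close> by (auto simp: psi.simps(2))
        qed
      qed
    next
      case nk: False
      have e: "phi (Node l c r) S b = Node l c (phi r S b)"
        using phi_R[OF rL False] Node.prems a nk by simp
      have rs: "rsub (phi r S b) \<noteq> Leaf" using core_basic[OF rL] Node.prems a nk by simp
      show ?thesis using Node.IH(2)[OF rL] Node.prems a nk e rL False rs rsub_nL[OF rs] by (simp add: psi.simps(2))
    qed
  qed
qed simp



definition good :: "tree \<times> second \<times> nat \<Rightarrow> bool" where
  "good x = (case x of (T, S, b) \<Rightarrow> smir_local T \<and> labels_pos T \<and> T \<noteq> Leaf \<and>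
     (\<forall>s. S = Tr s \<longrightarrow> smir_local s \<and> labels_pos s \<and> s \<noteq> Leaf) \<and> 1 \<le> b \<and> aof T \<noteq> b)"

lemma sv_mkS[simp]: "sv (mkS s) = s" by (simp add: mkS_def sv_def)
lemma c1_mkS: "c1 (mkS s) a b \<longleftrightarrow> s \<noteq> Leaf \<and> ((a < b \<and> rootlab s < b) \<or> (b < a \<and> b < rootlab s))"
  by (auto simp: mkS_def c1_def)
lemma mkS_Tr: "mkS s = Tr s' \<longleftrightarrow> s \<noteq> Leaf \<and> s' = s" by (auto simp: mkS_def)

lemma cut_info:
  assumes "smir_local t" "labels_pos t" "t \<noteq> Leaf" "\<not> P (rootlab t)"
  shows "fst (pcut P t) \<noteq> Leaf \<and> smir_local (fst (pcut P t)) \<and> labels_pos (fst (pcut P t))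
    \<and> smir_local (snd (pcut P t)) \<and> labels_pos (snd (pcut P t))
    \<and> (\<forall>x\<in>set (plabs (fst (pcut P t))). \<not> P x) \<and> \<not> P (aof (fst (pcut P t)))
    \<and> (snd (pcut P t) = Leaf \<or> P (rootlab (snd (pcut P t))))
    \<and> att (snd (pcut P t)) (fst (pcut P t)) = t"
proof -
  have a: "\<forall>x\<in>set (plabs (fst (pcut P t))). \<not> P x" using cut_plabs[of P t] assms(4) by blast
  have "aof (fst (pcut P t)) \<in> set (plabs (fst (pcut P t)))" using assms(3) by (simp add: aof_in)
  then show ?thesis using a assms smir_cut[OF assms(1)] lpos_cut[OF assms(2)] cut_snd[of P t] att_cut[of P t]
    by auto
qed

lemma phi_nk2: "T \<noteq> Leaf \<Longrightarrow> aof T \<noteq> b \<Longrightarrow> rsub (phi T S b) \<noteq> Leaf \<Longrightarrow>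
   \<not> k2 T S b \<and> rootlab (phi T S b) = rootlab T"
proof -
  assume a: "T \<noteq> Leaf" "aof T \<noteq> b" "rsub (phi T S b) \<noteq> Leaf"
  show ?thesis
  proof (cases "c1 S (aof T) b")
    case True
    then show ?thesis using a phi_c1[OF a(1) True] by (simp add: k2_def)
  next
    case False
    show ?thesis
    proof (cases "k2 T S b")
      case True
      then show ?thesis using a phi_k2[OF a(1) False True] by simp
    next
      case nk: False
      then show ?thesis using core_basic[OF a(1) a(2) False nk] by simp
    qed
  qed
qed

lemma phi_NodeL: "r \<noteq> Leaf \<Longrightarrow> lab l = Some c \<Longrightarrow> \<not> k2 l S b \<Longrightarrow> phi (Node l c r) S b = Node (phi l S b) c r"
proof -
  assume a: "r \<noteq> Leaf" "lab l = Some c" "\<not> k2 l S b"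
  then have lL: "l \<noteq> Leaf" by auto
  have ao: "aof (Node l c r) = aof l" using a by simp
  show ?thesis
  proof (cases "c1 S (aof l) b")
    case True
    then show ?thesis using phi_c1[OF lL True] phi_c1[of "Node l c r" S b] ao a by simp
  next
    case False
    then show ?thesis using phi_L[OF a(1) a(2) False a(3)] by simp
  qed
qed

lemma phi_NodeR: "r \<noteq> Leaf \<Longrightarrow> lab l \<noteq> Some c \<Longrightarrow> \<not> k2 r S b \<Longrightarrow> phi (Node l c r) S b = Node l c (phi r S b)"
proof -
  assume a: "r \<noteq> Leaf" "lab l \<noteq> Some c" "\<not> k2 r S b"
  have ao: "aof (Node l c r) = aof r" using a by simp
  show ?thesis
  proof (cases "c1 S (aof r) b")
    case True
    then show ?thesis using phi_c1[OF a(1) True] phi_c1[of "Node l c r" S b] ao a by simp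
  next
    case False
    then show ?thesis using phi_R[OF a(1) a(2) False a(3)] by simp
  qed
qed

lemma good_mkS: "smir_local s \<Longrightarrow> labels_pos s \<Longrightarrow> (\<forall>s'. mkS s = Tr s' \<longrightarrow> smir_local s' \<and> labels_pos s' \<and> s' \<noteq> Leaf)"
  by (auto simp: mkS_Tr)

lemma phi_psi:
  "smir_local t \<Longrightarrow> labels_pos t \<Longrightarrow> t \<noteq> Leaf \<Longrightarrow> (lsub t \<noteq> Leaf \<or> rsub t \<noteq> Leaf) \<Longrightarrow>
   good (psi t) \<and> phi (fst (psi t)) (fst (snd (psi t))) (snd (snd (psi t))) = t"
proof (induction t)
  case (Node l c r)
  have c1: "1 \<le> c" using Node.prems by simp
  show ?case
  proof (cases "r = Leaf")
    case rL: True
    then have lL: "l \<noteq> Leaf" using Node.prems by simp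
    have ll: "lab l \<noteq> Some c" using Node.prems rL by auto
    then have rlc: "rootlab l \<noteq> c" using lab_rootlab[OF lL] by auto
    show ?thesis
    proof (cases "rootlab l < c")
      case True
      define P where "P = (\<lambda>x::nat. c \<le> x)"
      have nP: "\<not> P (rootlab l)" using True by (simp add: P_def)
      note ci = cut_info[of l P, OF _ _ lL nP]
      define T where "T = fst (pcut P l)"
      define s where "s = snd (pcut P l)"
      have ps: "psi (Node l c r) = (T, mkS s, c)" using rL True by (simp add: psi.simps(2) T_def s_def P_def)
      have i: "T \<noteq> Leaf" "smir_local T" "labels_pos T" "smir_local s" "labels_pos s"
        "\<forall>x\<in>set (plabs T). x < c" "aof T < c" "s = Leaf \<or> c \<le> rootlab s" "att s T = l"
        using ci Node.prems by (auto simp: T_def s_def P_def)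
      have nc: "\<not> c1 (mkS s) (aof T) c" using i by (auto simp: c1_mkS)
      have k: "k2 T (mkS s) c" using i nc by (simp add: k2_def)
      have "phi T (mkS s) c = Node l c Leaf" using phi_k2[OF i(1) nc k] i by simp
      then show ?thesis using ps i c1 rL good_mkS[OF i(4) i(5)] by (simp add: good_def)
    next
      case False
      then have lt: "c < rootlab l" using rlc by auto
      define P where "P = (\<lambda>x::nat. x \<le> c)"
      have nP: "\<not> P (rootlab l)" using lt by (simp add: P_def)
      note ci = cut_info[of l P, OF _ _ lL nP]
      define T where "T = fst (pcut P l)"
      define s where "s = snd (pcut P l)"
      have ps: "psi (Node l c r) = (T, mkS s, c)" using rL False by (simp add: psi.simps(2) T_def s_def P_def)
      have i: "T \<noteq> Leaf" "smir_local T" "labels_pos T" "smir_local s" "labels_pos s"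
        "\<forall>x\<in>set (plabs T). c < x" "c < aof T" "s = Leaf \<or> rootlab s \<le> c" "att s T = l"
        using ci Node.prems by (auto simp: T_def s_def P_def)
      have nc: "\<not> c1 (mkS s) (aof T) c" using i by (auto simp: c1_mkS)
      have k: "k2 T (mkS s) c" using i nc by (simp add: k2_def)
      have "phi T (mkS s) c = Node l c Leaf" using phi_k2[OF i(1) nc k] i by simp
      then show ?thesis using ps i c1 rL good_mkS[OF i(4) i(5)] by (simp add: good_def)
    qed
  next
    case rN: False
    show ?thesis
    proof (cases "lab l = Some c")
      case lc: True
      then obtain l0 lr where lN: "l = Node l0 c lr" by (auto simp: lab_Some_iff)
      show ?thesis
      proof (cases "lr = Leaf")
        case True
        have sm: "lab l0 \<noteq> Some c" using Node.prems lN True by auto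
        obtain e where e: "lab r = Some e" "e < c" using Node.prems lc by auto
        have rr: "rootlab r < c" using e by (cases r) auto
        define P where "P = (\<lambda>x::nat. c \<le> x)"
        have nP: "\<not> P (rootlab r)" using rr by (simp add: P_def)
        note ci = cut_info[of r P, OF _ _ rN nP]
        define Tr' where "Tr' = fst (pcut P r)"
        define s where "s = snd (pcut P r)"
        have ps: "psi (Node l c r) = (Node l0 c Tr', mkS s, c)" using rN lc lN True
          by (simp add: psi.simps(2) Tr'_def s_def P_def)
        have i: "Tr' \<noteq> Leaf" "smir_local Tr'" "labels_pos Tr'" "smir_local s" "labels_pos s"
          "\<forall>x\<in>set (plabs Tr'). x < c" "aof Tr' < c" "s = Leaf \<or> c \<le> rootlab s" "att s Tr' = r"
          "lab Tr' = lab r"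
          using ci Node.prems by (auto simp: Tr'_def s_def P_def)
        have ao: "aof (Node l0 c Tr') = aof Tr'" using i(1) sm by simp
        have nc: "\<not> c1 (mkS s) (aof Tr') c" using i by (auto simp: c1_mkS)
        have k: "k2 Tr' (mkS s) c" using i nc by (simp add: k2_def)
        have nk: "\<not> k2 (Node l0 c Tr') (mkS s) c" using k2_right[OF i(1) sm] i by simp
        have "phi (Node l0 c Tr') (mkS s) c = Node (Node l0 c Leaf) c r"
          using phi_root[OF i(1) sm nc nk k] i by simp
        moreover have "good (Node l0 c Tr', mkS s, c)"
          using i c1 good_mkS[OF i(4) i(5)] ao sm e Node.prems lN by (auto simp: good_def)
        ultimately show ?thesis using ps lN True by simp
      next
        case False
        have IH: "good (psi l) \<and> phi (fst (psi l)) (fst (snd (psi l))) (snd (snd (psi l))) = l"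
          using Node.IH(1) Node.prems lN False by simp
        obtain Tl S b where pl: "psi l = (Tl, S, b)" by (cases "psi l") auto
        have g: "good (Tl, S, b)" and ph: "phi Tl S b = l" using IH pl by auto
        have TlL: "Tl \<noteq> Leaf" and ab: "aof Tl \<noteq> b" using g by (auto simp: good_def)
        have "rsub (phi Tl S b) \<noteq> Leaf" using ph lN False by simp
        then have "\<not> k2 Tl S b \<and> rootlab (phi Tl S b) = rootlab Tl" by (rule phi_nk2[OF TlL ab])
        then have nk: "\<not> k2 Tl S b" and rt: "rootlab Tl = c" using ph lN by auto
        have lt: "lab Tl = Some c" using rt lab_rootlab[OF TlL] by simp
        have ps: "psi (Node l c r) = (Node Tl c r, S, b)" using rN lc lN False pl
          by (simp add: psi.simps(2))
        have "phi (Node Tl c r) S b = Node l c r" using phi_NodeL[OF rN lt nk] ph by simp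
        moreover have "good (Node Tl c r, S, b)"
          using g Node.prems lt lc rN c1 by (auto simp: good_def)
        ultimately show ?thesis using ps by simp
      qed
    next
      case lc: False
      then obtain r0 x r1 where rN': "r = Node r0 x r1" using rN by (cases r) auto
      show ?thesis
      proof (cases "r1 = Leaf")
        case r1L: True
        have r0x: "lab r0 \<noteq> Some x" using Node.prems rN' r1L by auto
        have x1: "1 \<le> x" using Node.prems rN' by simp
        show ?thesis
        proof (cases "c = x")
          case cx: True
          obtain e where e: "lab l = Some e" "c < e" using Node.prems rN' cx by auto
          have lL: "l \<noteq> Leaf" using e by auto
          have rr: "c < rootlab l" using e by (cases l) auto
          define P where "P = (\<lambda>y::nat. y \<le> c)"
          have nP: "\<not> P (rootlab l)" using rr by (simp add: P_def)
          note ci = cut_info[of l P, OF _ _ lL nP]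
          define Tl where "Tl = fst (pcut P l)"
          define s where "s = snd (pcut P l)"
          have ps: "psi (Node l c r) = (Node r0 c Tl, mkS s, c)" using rN lc rN' r1L cx
            by (simp add: psi.simps(2) Tl_def s_def P_def)
          have i: "Tl \<noteq> Leaf" "smir_local Tl" "labels_pos Tl" "smir_local s" "labels_pos s"
            "\<forall>y\<in>set (plabs Tl). c < y" "c < aof Tl" "s = Leaf \<or> rootlab s \<le> c" "att s Tl = l"
            "lab Tl = lab l"
            using ci Node.prems by (auto simp: Tl_def s_def P_def)
          have sm: "lab r0 \<noteq> Some c" using r0x cx by simp
          have ao: "aof (Node r0 c Tl) = aof Tl" using i(1) sm by simp
          have nc: "\<not> c1 (mkS s) (aof Tl) c" using i by (auto simp: c1_mkS)
          have k: "k2 Tl (mkS s) c" using i nc by (simp add: k2_def)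
          have nk: "\<not> k2 (Node r0 c Tl) (mkS s) c" using k2_right[OF i(1) sm] i by simp
          have "phi (Node r0 c Tl) (mkS s) c = Node l c (Node r0 c Leaf)"
            using phi_root[OF i(1) sm nc nk k] i by simp
          moreover have "good (Node r0 c Tl, mkS s, c)"
            using i c1 good_mkS[OF i(4) i(5)] ao sm e Node.prems rN' by (auto simp: good_def)
          ultimately show ?thesis using ps rN' r1L cx by simp
        next
          case cx: False
          have lab_ok: "smir_local (Node l c Leaf)" using Node.prems lc by simp
          show ?thesis
          proof (cases "r0 = Leaf")
            case True
            have ps: "psi (Node l c r) = (Node l c Leaf, D, x)" using rN lc rN' r1L cx True
              by (simp add: psi.simps(2))
            have "phi (Node l c Leaf) D x = Node l c r"
              using phi_c1[of "Node l c Leaf" D x] rN' r1L True by (simp add: c1_def sv_def)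
            moreover have "good (Node l c Leaf, D, x)" using Node.prems lab_ok x1 cx by (simp add: good_def)
            ultimately show ?thesis using ps by simp
          next
            case r0N: False
            have r0x': "rootlab r0 \<noteq> x" using r0x lab_rootlab[OF r0N] by auto
            show ?thesis
            proof (cases "(c < x \<and> rootlab r0 < x) \<or> (x < c \<and> x < rootlab r0)")
              case True
              have ps: "psi (Node l c r) = (Node l c Leaf, Tr r0, x)" using rN lc rN' r1L cx r0N True
                by (simp add: psi.simps(2))
              have "phi (Node l c Leaf) (Tr r0) x = Node l c r"
                using phi_c1[of "Node l c Leaf" "Tr r0" x] rN' r1L True by (simp add: c1_def sv_def)
              moreover have "good (Node l c Leaf, Tr r0, x)" using Node.prems lab_ok x1 cx r0N rN'
                by (simp add: good_def)
              ultimately show ?thesis using ps by simp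
            next
              case opp: False
              show ?thesis
              proof (cases "x < c")
                case xc: True
                then have r0lt: "rootlab r0 < x" using opp r0x' by auto
                define P where "P = (\<lambda>y::nat. x \<le> y)"
                have nP: "\<not> P (rootlab r0)" using r0lt by (simp add: P_def)
                note ci = cut_info[of r0 P, OF _ _ r0N nP]
                define Tr' where "Tr' = fst (pcut P r0)"
                define s where "s = snd (pcut P r0)"
                have ps: "psi (Node l c r) = (Node l c Tr', mkS s, x)" using rN lc rN' r1L cx r0N opp xc
                  by (simp add: psi.simps(2) Tr'_def s_def P_def)
                have i: "Tr' \<noteq> Leaf" "smir_local Tr'" "labels_pos Tr'" "smir_local s" "labels_pos s"
                  "\<forall>y\<in>set (plabs Tr'). y < x" "aof Tr' < x" "s = Leaf \<or> x \<le> rootlab s" "att s Tr' = r0"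
                  "lab Tr' = lab r0"
                  using ci Node.prems rN' by (auto simp: Tr'_def s_def P_def)
                have ao: "aof (Node l c Tr') = aof Tr'" using i(1) lc by simp
                have nc: "\<not> c1 (mkS s) (aof Tr') x" using i by (auto simp: c1_mkS)
                have k: "k2 Tr' (mkS s) x" using i nc by (simp add: k2_def)
                have nk: "\<not> k2 (Node l c Tr') (mkS s) x" using k2_right[OF i(1) lc] i xc by simp
                have "phi (Node l c Tr') (mkS s) x = Node l c (Node r0 x Leaf)"
                  using phi_root[OF i(1) lc nc nk k] i cx by simp
                moreover have "good (Node l c Tr', mkS s, x)"
                  using i c1 x1 good_mkS[OF i(4) i(5)] ao lc Node.prems rN' r0lt xc lab_rootlab[OF r0N]
                  by (auto simp: good_def)
                ultimately show ?thesis using ps rN' r1L by simp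
              next
                case xc: False
                then have xc': "c < x" using cx by auto
                then have r0gt: "x < rootlab r0" using opp r0x' by auto
                define P where "P = (\<lambda>y::nat. y \<le> x)"
                have nP: "\<not> P (rootlab r0)" using r0gt by (simp add: P_def)
                note ci = cut_info[of r0 P, OF _ _ r0N nP]
                define Tr' where "Tr' = fst (pcut P r0)"
                define s where "s = snd (pcut P r0)"
                have ps: "psi (Node l c r) = (Node l c Tr', mkS s, x)" using rN lc rN' r1L cx r0N opp xc
                  by (simp add: psi.simps(2) Tr'_def s_def P_def)
                have i: "Tr' \<noteq> Leaf" "smir_local Tr'" "labels_pos Tr'" "smir_local s" "labels_pos s"
                  "\<forall>y\<in>set (plabs Tr'). x < y" "x < aof Tr'" "s = Leaf \<or> rootlab s \<le> x" "att s Tr' = r0"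
                  "lab Tr' = lab r0"
                  using ci Node.prems rN' by (auto simp: Tr'_def s_def P_def)
                have ao: "aof (Node l c Tr') = aof Tr'" using i(1) lc by simp
                have nc: "\<not> c1 (mkS s) (aof Tr') x" using i by (auto simp: c1_mkS)
                have k: "k2 Tr' (mkS s) x" using i nc by (simp add: k2_def)
                have nk: "\<not> k2 (Node l c Tr') (mkS s) x" using k2_right[OF i(1) lc] i xc' by simp
                have "phi (Node l c Tr') (mkS s) x = Node l c (Node r0 x Leaf)"
                  using phi_root[OF i(1) lc nc nk k] i cx by simp
                moreover have "good (Node l c Tr', mkS s, x)"
                  using i c1 x1 good_mkS[OF i(4) i(5)] ao lc Node.prems rN' r0gt xc' lab_rootlab[OF r0N]
                  by (auto simp: good_def)
                ultimately show ?thesis using ps rN' r1L by simp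
              qed
            qed
          qed
        qed
      next
        case False
        have IH: "good (psi r) \<and> phi (fst (psi r)) (fst (snd (psi r))) (snd (snd (psi r))) = r"
          using Node.IH(2) Node.prems rN' False by simp
        obtain Tr' S b where pr: "psi r = (Tr', S, b)" by (cases "psi r") auto
        have g: "good (Tr', S, b)" and ph: "phi Tr' S b = r" using IH pr by auto
        have TL: "Tr' \<noteq> Leaf" and ab: "aof Tr' \<noteq> b" using g by (auto simp: good_def)
        have "rsub (phi Tr' S b) \<noteq> Leaf" using ph rN' False by simp
        then have "\<not> k2 Tr' S b \<and> rootlab (phi Tr' S b) = rootlab Tr'" by (rule phi_nk2[OF TL ab])
        then have nk: "\<not> k2 Tr' S b" and rt: "rootlab Tr' = x" using ph rN' by auto
        have lt: "lab Tr' = Some x" using rt lab_rootlab[OF TL] by simp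
        have ps: "psi (Node l c r) = (Node l c Tr', S, b)" using rN lc rN' False pr
          by (simp add: psi.simps(2))
        have "phi (Node l c Tr') S b = Node l c r" using phi_NodeR[OF TL lc nk] ph by simp
        moreover have "good (Node l c Tr', S, b)"
          using g Node.prems lt lc rN' c1 TL by (auto simp: good_def)
        ultimately show ?thesis using ps by simp
      qed
    qed
  qed
qed simp



definition qf :: "nat \<Rightarrow> nat \<Rightarrow> nat \<Rightarrow> bool" where "qf a b x = (if a < b then b \<le> x else x \<le> b)"

definition gsel :: "nat \<Rightarrow> nat \<Rightarrow> nat \<Rightarrow> tree \<Rightarrow> tree" where
  "gsel b a d = (if d \<noteq> b then (\<lambda>t. case t of Leaf \<Rightarrow> Leaf | Node l x r \<Rightarrow> Node l x (Node r b Leaf))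
     else if a < b then (\<lambda>t. case t of Leaf \<Rightarrow> Leaf | Node l x r \<Rightarrow> Node (Node l b Leaf) x r)
     else (\<lambda>t. case t of Leaf \<Rightarrow> Leaf | Node l x r \<Rightarrow> Node r x (Node l b Leaf)))"

lemma core_modat:
  "T \<noteq> Leaf \<Longrightarrow> aof T \<noteq> b \<Longrightarrow> \<not> c1 S (aof T) b \<Longrightarrow> \<not> k2 T S b \<Longrightarrow>
   cnd (qf (aof T) b) T \<noteq> [] \<and>
   phi T S b = modat (gsel b (aof T) (rootlab (sub T (last (cnd (qf (aof T) b) T))))) (last (cnd (qf (aof T) b) T)) (att (sv S) T)"
proof (induction T)
  case (Node l c r)
  have rL: "r \<noteq> Leaf" using Node.prems by (auto simp: k2_leaf)
  show ?case
  proof (cases "lab l = Some c")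
    case True
    then have lL: "l \<noteq> Leaf" by auto
    have a: "aof (Node l c r) = aof l" using rL True by simp
    have nk: "\<not> k2 l S b" using Node.prems k2_left[OF rL True] by simp
    have e: "phi (Node l c r) S b = Node (phi l S b) c r"
      using phi_L[OF rL True] Node.prems a nk by simp
    have IH: "cnd (qf (aof l) b) l \<noteq> [] \<and>
      phi l S b = modat (gsel b (aof l) (rootlab (sub l (last (cnd (qf (aof l) b) l))))) (last (cnd (qf (aof l) b) l)) (att (sv S) l)"
      using Node.IH(1)[OF lL] Node.prems a nk by simp
    show ?thesis using IH e a rL True by (simp add: cnd_Node last_map)
  next
    case False
    have a: "aof (Node l c r) = aof r" using rL False by simp
    show ?thesis
    proof (cases "k2 r S b")
      case True
      have e: "phi (Node l c r) S b = (if c = b then (if aof r < b then Node (Node l b Leaf) c (att (sv S) r) else Node (att (sv S) r) c (Node l b Leaf))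
       else Node l c (Node (att (sv S) r) b Leaf))"
        using phi_root[OF rL False] Node.prems a True by simp
      have rf: "(aof r < b \<longrightarrow> rootlab r < b \<and> b \<le> c) \<and> (b < aof r \<longrightarrow> b < rootlab r \<and> c \<le> b)"
        using root_facts[OF rL False] Node.prems a True by simp
      have ab: "aof r < b \<or> b < aof r" using Node.prems a by auto
      have qc: "qf (aof r) b c" using rf ab by (auto simp: qf_def)
      have nq: "\<forall>x\<in>set (plabs r). \<not> qf (aof r) b x"
      proof
        fix x assume xi: "x \<in> set (plabs r)"
        show "\<not> qf (aof r) b x" using k2_lt[OF True _ xi] k2_gt[OF True _ xi] ab by (auto simp: qf_def)
      qed
      have cr: "cnd (qf (aof r) b) r = []"
        using cnd_ne[of "qf (aof r) b" r] nq by auto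
      show ?thesis using e a rL False qc cr by (auto simp: cnd_Node gsel_def)
    next
      case nk: False
      have e: "phi (Node l c r) S b = Node l c (phi r S b)"
        using phi_R[OF rL False] Node.prems a nk by simp
      have IH: "cnd (qf (aof r) b) r \<noteq> [] \<and>
        phi r S b = modat (gsel b (aof r) (rootlab (sub r (last (cnd (qf (aof r) b) r))))) (last (cnd (qf (aof r) b) r)) (att (sv S) r)"
        using Node.IH(2)[OF rL] Node.prems a nk by simp
      show ?thesis using IH e a rL False by (simp add: cnd_Node last_map)
    qed
  qed
qed simp

lemma filter_cnd: "filter (\<lambda>p. if a < b then b \<le> rootlab (sub T p) else rootlab (sub T p) \<le> b) (ppath T) = cnd (qf a b) T"
  by (simp add: cnd_def qf_def)

lemma Phi_D: assumes nl: "T \<noteq> Leaf"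
  shows "Phi T D b = Some (att (Node Leaf b Leaf) T)"
  by (simp add: Phi_def Let_def principal_label_aof modat_alpha)

lemma Phi_U1: assumes nl: "T \<noteq> Leaf" and a: "aof T < b" "\<forall>x\<in>set (plabs T). x < b"
  shows "Phi T U b = Some (Node T b Leaf)"
  using a by (simp add: Phi_def Let_def principal_label_aof modat_alpha pmax_less[OF nl])

lemma Phi_Tr1: assumes nl: "T \<noteq> Leaf" and a: "aof T < b" "\<forall>x\<in>set (plabs T). x < b" "b \<le> rootlab s"
  shows "Phi T (Tr s) b = Some (Node (att s T) b Leaf)"
  using a by (simp add: Phi_def Let_def principal_label_aof modat_alpha pmax_less[OF nl])

lemma filter_ge: "filter (\<lambda>p. b \<le> rootlab (sub T p)) (ppath T) = cnd (\<lambda>x. b \<le> x) T"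
  by (simp add: cnd_def)
lemma filter_le: "filter (\<lambda>p. rootlab (sub T p) \<le> b) (ppath T) = cnd (\<lambda>x. x \<le> b) T"
  by (simp add: cnd_def)

lemma Phi_core_U_lt: assumes nl: "T \<noteq> Leaf" and a: "aof T < b" "cnd (\<lambda>x. b \<le> x) T \<noteq> []"
  shows "Phi T U b = Some (modat (gsel b (aof T) (rootlab (sub T (last (cnd (\<lambda>x. b \<le> x) T))))) (last (cnd (\<lambda>x. b \<le> x) T)) T)"
proof -
  have "\<exists>x\<in>set (plabs T). b \<le> x" using a(2) cnd_ne[of "\<lambda>x. b \<le> x" T] by simp
  then have nf: "b \<le> pmax T" using pmax_ge[OF nl] by simp
  moreover have "b \<le> rootlab (sub T (last (cnd (\<lambda>x. b \<le> x) T)))" using cnd_last[OF a(2)] .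
  ultimately show ?thesis
    using a nf by (simp add: Phi_def Let_def principal_label_aof modat_alpha filter_ge gsel_def)
qed

lemma Phi_core_U_gt: assumes nl: "T \<noteq> Leaf" and a: "b < aof T" "cnd (\<lambda>x. x \<le> b) T \<noteq> []"
  shows "Phi T U b = Some (modat (gsel b (aof T) (rootlab (sub T (last (cnd (\<lambda>x. x \<le> b) T))))) (last (cnd (\<lambda>x. x \<le> b) T)) T)"
proof -
  have "\<exists>x\<in>set (plabs T). x \<le> b" using a(2) cnd_ne[of "\<lambda>x. x \<le> b" T] by simp
  then have nf: "pmin T \<le> b" using pmin_le[OF nl] by simp
  moreover have "rootlab (sub T (last (cnd (\<lambda>x. x \<le> b) T))) \<le> b" using cnd_last[OF a(2)] .
  ultimately show ?thesis
    using a nf by (simp add: Phi_def Let_def principal_label_aof modat_alpha filter_le gsel_def)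
qed

lemma Phi_core_Tr_lt: assumes nl: "T \<noteq> Leaf" and a: "aof T < b" "cnd (\<lambda>x. b \<le> x) T \<noteq> []" "b \<le> rootlab s"
  shows "Phi T (Tr s) b = Some (modat (gsel b (aof T) (rootlab (sub T (last (cnd (\<lambda>x. b \<le> x) T))))) (last (cnd (\<lambda>x. b \<le> x) T)) (att s T))"
proof -
  have "\<exists>x\<in>set (plabs T). b \<le> x" using a(2) cnd_ne[of "\<lambda>x. b \<le> x" T] by simp
  then have nf: "b \<le> pmax T" using pmax_ge[OF nl] by simp
  moreover have "b \<le> rootlab (sub T (last (cnd (\<lambda>x. b \<le> x) T)))" using cnd_last[OF a(2)] .
  ultimately show ?thesis
    using a nf by (simp add: Phi_def Let_def principal_label_aof modat_alpha filter_ge gsel_def)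
qed

lemma Phi_core_Tr_gt: assumes nl: "T \<noteq> Leaf" and a: "b < aof T" "cnd (\<lambda>x. x \<le> b) T \<noteq> []" "rootlab s \<le> b"
  shows "Phi T (Tr s) b = Some (modat (gsel b (aof T) (rootlab (sub T (last (cnd (\<lambda>x. x \<le> b) T))))) (last (cnd (\<lambda>x. x \<le> b) T)) (att s T))"
proof -
  have "\<exists>x\<in>set (plabs T). x \<le> b" using a(2) cnd_ne[of "\<lambda>x. x \<le> b" T] by simp
  then have nf: "pmin T \<le> b" using pmin_le[OF nl] by simp
  moreover have "rootlab (sub T (last (cnd (\<lambda>x. x \<le> b) T))) \<le> b" using cnd_last[OF a(2)] .
  ultimately show ?thesis
    using a nf by (simp add: Phi_def Let_def principal_label_aof modat_alpha filter_le gsel_def)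
qed

lemma Phi_U2: assumes nl: "T \<noteq> Leaf" and a: "b < aof T" "\<forall>x\<in>set (plabs T). b < x"
  shows "Phi T U b = Some (Node T b Leaf)"
  using a by (simp add: Phi_def Let_def principal_label_aof modat_alpha pmin_gr[OF nl])

lemma Phi_Tr2: assumes nl: "T \<noteq> Leaf" and a: "b < aof T" "\<forall>x\<in>set (plabs T). b < x" "rootlab s \<le> b"
  shows "Phi T (Tr s) b = Some (Node (att s T) b Leaf)"
  using a by (simp add: Phi_def Let_def principal_label_aof modat_alpha pmin_gr[OF nl])

lemma Phi_Trc1: assumes nl: "T \<noteq> Leaf" and a: "(aof T < b \<and> rootlab s < b) \<or> (b < aof T \<and> b < rootlab s)"
  shows "Phi T (Tr s) b = Some (att (Node s b Leaf) T)"
  using a by (auto simp add: Phi_def Let_def principal_label_aof modat_alpha)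

lemma Phi_eq: assumes nl: "T \<noteq> Leaf" and ab: "aof T \<noteq> b"
  shows "Phi T S b = Some (phi T S b)"
proof (cases "c1 S (aof T) b")
  case True
  have e: "phi T S b = att (Node (sv S) b Leaf) T" by (rule phi_c1[OF nl True])
  show ?thesis
  proof (cases S)
    case D then show ?thesis using e Phi_D[OF nl] by (simp add: sv_def)
  next
    case U then show ?thesis using True by (simp add: c1_def)
  next
    case (Tr s) then show ?thesis using e True Phi_Trc1[OF nl] by (simp add: sv_def c1_def)
  qed
next
  case nc: False
  have far: "sv S = Leaf \<or> ((aof T < b \<longrightarrow> b \<le> rootlab (sv S)) \<and> (b < aof T \<longrightarrow> rootlab (sv S) \<le> b))"
    using sv_far[OF nc] .
  show ?thesis
  proof (cases "k2 T S b")
    case k: True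
    have e: "phi T S b = Node (att (sv S) T) b Leaf" by (rule phi_k2[OF nl nc k])
    show ?thesis
    proof (cases S)
      case D then show ?thesis using nc by (simp add: c1_def)
    next
      case U
      then show ?thesis using e k Phi_U1[OF nl] Phi_U2[OF nl] ab by (auto simp: sv_def k2_def)
    next
      case (Tr s)
      then show ?thesis using e k Phi_Tr1[OF nl] Phi_Tr2[OF nl] ab nc by (auto simp: sv_def k2_def c1_def)
    qed
  next
    case nk: False
    note cm = core_modat[OF nl ab nc nk]
    show ?thesis
    proof (cases "aof T < b")
      case lt: True
      have q: "qf (aof T) b = (\<lambda>x. b \<le> x)" using lt by (auto simp: qf_def)
      show ?thesis
      proof (cases S)
        case D then show ?thesis using nc by (simp add: c1_def)
      next
        case U
        then show ?thesis using cm q Phi_core_U_lt[OF nl lt] by (simp add: sv_def)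
      next
        case (Tr s)
        then show ?thesis using cm q Phi_core_Tr_lt[OF nl lt] nc lt by (auto simp: sv_def c1_def)
      qed
    next
      case ge: False
      then have gt: "b < aof T" using ab by auto
      have q: "qf (aof T) b = (\<lambda>x. x \<le> b)" using ge by (auto simp: qf_def)
      show ?thesis
      proof (cases S)
        case D then show ?thesis using nc by (simp add: c1_def)
      next
        case U
        then show ?thesis using cm q Phi_core_U_gt[OF nl gt] by (simp add: sv_def)
      next
        case (Tr s)
        then show ?thesis using cm q Phi_core_Tr_gt[OF nl gt] nc gt by (auto simp: sv_def c1_def)
      qed
    qed
  qed
qed



lemma Xset_good: "x \<in> Xset \<longleftrightarrow> good x"
  by (cases x) (auto simp: Xset_def good_def smirnov_def principal_label_aof)

lemma wt_single: "wt (Node Leaf b Leaf) = {#X b#}" by simp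

lemma phi_props:
  assumes g: "good (T, S, b)"
  shows "smirnov (phi T S b) \<and> 2 \<le> nnodes (phi T S b) \<and> wt (phi T S b) = wtriple (T, S, b)
    \<and> aof (phi T S b) = b \<and> psi (phi T S b) = (T, S, b)"
proof -
  have sm: "smir_local T" and lp: "labels_pos T" and nl: "T \<noteq> Leaf" and b1: "1 \<le> b" and ab: "aof T \<noteq> b"
    and vS: "\<forall>s. S = Tr s \<longrightarrow> smir_local s \<and> labels_pos s \<and> s \<noteq> Leaf"
    using g by (auto simp: good_def)
  have smS: "smir_local (sv S)" and lpS: "labels_pos (sv S)" using vS by (cases S; simp add: sv_def)+
  have vS': "\<forall>s. S = Tr s \<longrightarrow> s \<noteq> Leaf" using vS by auto
  have ab2: "aof T < b \<or> b < aof T" using ab by auto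
  show ?thesis
  proof (cases "c1 S (aof T) b")
    case True
    have e: "phi T S b = att (Node (sv S) b Leaf) T" by (rule phi_c1[OF nl True])
    have sN: "smir_local (Node (sv S) b Leaf)"
      using True smS vS by (cases S) (auto simp: c1_def sv_def lab_Some_iff)
    have s1: "smir_local (phi T S b)" using e smir_local_att[OF sm sN] ab by simp
    have s2: "labels_pos (phi T S b)" using e labels_pos_att[OF lp] lpS b1 by simp
    have nn: "2 \<le> nnodes (phi T S b)" using e nnodes_att[OF nl] nl by (cases T) auto
    have w: "wt (phi T S b) = wtriple (T, S, b)"
    proof (cases S)
      case D then show ?thesis using e wt_att[OF nl] ab by (auto simp: sv_def ew_def principal_label_aof)
    next
      case U then show ?thesis using True by (simp add: c1_def)
    next
      case (Tr s)
      then show ?thesis using e wt_att[OF nl] ab True vS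
        by (auto simp: sv_def ew_def c1_def wt_Node' lw_rootlab principal_label_aof simp del: wt.simps(2))
    qed
    have a: "aof (phi T S b) = b" using e aof_att[OF sm nl] by simp
    have p: "psi (phi T S b) = (T, S, b)" using e psi_c1[OF sm nl True vS' ab] by simp
    show ?thesis using s1 s2 nn w a p nl e by (simp add: smirnov_def)
  next
    case nc: False
    have far: "sv S = Leaf \<or> ((aof T < b \<longrightarrow> b \<le> rootlab (sv S)) \<and> (b < aof T \<longrightarrow> rootlab (sv S) \<le> b))"
      using sv_far[OF nc] .
    have nD: "S \<noteq> D" using nc by (simp add: c1_def)
    have wtr: "wtriple (T, S, b) = wt T + wt (sv S) + ew (aof T) (sv S) + {#X b#} + {#if aof T < b then LamBar else Lam#}"
    proof (cases S)
      case D then show ?thesis using nD by simp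
    next
      case U then show ?thesis by (simp add: sv_def ew_def principal_label_aof)
    next
      case (Tr s)
      then have "s \<noteq> Leaf" using vS by simp
      then show ?thesis using Tr far ab2 by (auto simp: sv_def ew_rootlab principal_label_aof)
    qed
    show ?thesis
    proof (cases "k2 T S b")
      case k: True
      have e: "phi T S b = Node (att (sv S) T) b Leaf" by (rule phi_k2[OF nl nc k])
      have rl: "rootlab T \<in> set (plabs T)" using nl by (rule rootlab_in)
      have rlt: "(aof T < b \<longrightarrow> rootlab T < b) \<and> (b < aof T \<longrightarrow> b < rootlab T)"
        using k2_lt[OF k _ rl] k2_gt[OF k _ rl] by auto
      have la: "lab (att (sv S) T) = Some (rootlab T)" using nl by (simp add: lab_rootlab)
      have sa: "smir_local (att (sv S) T)" using smir_local_att[OF sm smS] sv_ne_a[OF nc ab] by simp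
      have s1: "smir_local (phi T S b)" using e la sa rlt ab2 by auto
      have s2: "labels_pos (phi T S b)" using e labels_pos_att[OF lp lpS] b1 by simp
      have nn: "2 \<le> nnodes (phi T S b)" using e nnodes_att[OF nl] nl by (cases T) auto
      have w: "wt (phi T S b) = wtriple (T, S, b)"
        using e wtr wt_att[OF nl] rlt ab2 nl
        by (auto simp: wt_Node' lw_rootlab ew_rootlab simp del: wt.simps(2))
      have a: "aof (phi T S b) = b" using e by simp
      have p: "psi (phi T S b) = (T, S, b)" using e psi_k2[OF sm nl k vS' ab] by simp
      show ?thesis using s1 s2 nn w a p e by (simp add: smirnov_def)
    next
      case nk: False
      have cb: "rootlab (phi T S b) = rootlab T \<and> rsub (phi T S b) \<noteq> Leaf \<and> nnodes (phi T S b) = nnodes T + nnodes (sv S) + 1"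
        by (rule core_basic[OF nl ab nc nk])
      have cs: "smir_local (phi T S b) \<and> aof (phi T S b) = b \<and> (labels_pos T \<longrightarrow> labels_pos (sv S) \<longrightarrow> 1 \<le> b \<longrightarrow> labels_pos (phi T S b))"
        by (rule core_smir[OF nl ab nc nk sm smS])
      have w: "wt (phi T S b) = wtriple (T, S, b)" using core_wt[OF nl ab nc nk] wtr by simp
      have p: "psi (phi T S b) = (T, S, b)" by (rule core_psi[OF nl ab nc nk sm vS'])
      have nn: "2 \<le> nnodes (phi T S b)" using cb nl by (cases T) auto
      show ?thesis using cb cs w p nn lp lpS b1 rsub_nL[of "phi T S b"] by (simp add: smirnov_def)
    qed
  qed
qed

lemma nnodes2: "2 \<le> nnodes t \<Longrightarrow> t \<noteq> Leaf \<and> (lsub t \<noteq> Leaf \<or> rsub t \<noteq> Leaf)"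
  by (cases t) (auto elim: nnodes.elims)

theorem theorem1:
  shows "(\<forall>(T, S, b) \<in> Xset. Phi T S b \<noteq> None)
    \<and> bij_betw (\<lambda>(T, S, b). the (Phi T S b)) Xset {t. smirnov t \<and> nnodes t \<ge> 2}
    \<and> (\<forall>(T, S, b) \<in> Xset. wt (the (Phi T S b)) = wtriple (T, S, b))
    \<and> (\<forall>(T, S, b) \<in> Xset. principal_label (the (Phi T S b)) = b)"
proof -
  have PE: "Phi T S b = Some (phi T S b)" if "(T, S, b) \<in> Xset" for T S b
  proof -
    have "T \<noteq> Leaf" "aof T \<noteq> b" using that by (auto simp: Xset_good good_def)
    then show ?thesis by (rule Phi_eq)
  qed
  have PP: "smirnov (phi T S b) \<and> 2 \<le> nnodes (phi T S b) \<and> wt (phi T S b) = wtriple (T, S, b)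
    \<and> aof (phi T S b) = b \<and> psi (phi T S b) = (T, S, b)" if "(T, S, b) \<in> Xset" for T S b
    using phi_props that by (simp add: Xset_good)
  have A: "\<forall>(T, S, b) \<in> Xset. Phi T S b \<noteq> None" using PE by auto
  have C: "\<forall>(T, S, b) \<in> Xset. wt (the (Phi T S b)) = wtriple (T, S, b)" using PE PP by auto
  have Dd: "\<forall>(T, S, b) \<in> Xset. principal_label (the (Phi T S b)) = b" using PE PP by (auto simp: principal_label_aof)
  have B: "bij_betw (\<lambda>(T, S, b). the (Phi T S b)) Xset {t. smirnov t \<and> nnodes t \<ge> 2}"
  proof (rule bij_betw_byWitness[where f' = psi])
    show "\<forall>a\<in>Xset. psi ((\<lambda>(T, S, b). the (Phi T S b)) a) = a" using PE PP by auto
  next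
    show "\<forall>a'\<in>{t. smirnov t \<and> 2 \<le> nnodes t}. (\<lambda>(T, S, b). the (Phi T S b)) (psi a') = a'"
    proof
      fix t assume "t \<in> {t. smirnov t \<and> 2 \<le> nnodes t}"
      then have "smir_local t" "labels_pos t" "t \<noteq> Leaf" "lsub t \<noteq> Leaf \<or> rsub t \<noteq> Leaf"
        using nnodes2[of t] by (auto simp: smirnov_def)
      then have h: "good (psi t) \<and> phi (fst (psi t)) (fst (snd (psi t))) (snd (snd (psi t))) = t" by (rule phi_psi)
      obtain T S b where ps: "psi t = (T, S, b)" by (cases "psi t") auto
      have "(T, S, b) \<in> Xset" using h ps by (simp add: Xset_good)
      then show "(\<lambda>(T, S, b). the (Phi T S b)) (psi t) = t" using PE h ps by simp
    qed
  next
    show "(\<lambda>(T, S, b). the (Phi T S b)) ` Xset \<subseteq> {t. smirnov t \<and> 2 \<le> nnodes t}" using PE PP by auto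
  next
    show "psi ` {t. smirnov t \<and> 2 \<le> nnodes t} \<subseteq> Xset"
    proof
      fix x assume "x \<in> psi ` {t. smirnov t \<and> 2 \<le> nnodes t}"
      then obtain t where x: "x = psi t" and "smirnov t" "2 \<le> nnodes t" by auto
      then have "smir_local t" "labels_pos t" "t \<noteq> Leaf" "lsub t \<noteq> Leaf \<or> rsub t \<noteq> Leaf"
        using nnodes2[of t] by (auto simp: smirnov_def)
      then have "good (psi t) \<and> phi (fst (psi t)) (fst (snd (psi t))) (snd (snd (psi t))) = t" by (rule phi_psi)
      then show "x \<in> Xset" using x by (simp add: Xset_good)
    qed
  qed
  show ?thesis using A B C Dd by blast
qed


end
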